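(* For a finite set $\mathcal{D}$ and $n\ge1$, let $p(n,\mathcal{D})$ be the number of degenerate $n$-ary relations on $\mathcal{D}$ divided by the number $2^{|\mathcal{D}|^n}$ of all $n$-ary relations on $\mathcal{D}$. Then $p(n,\mathcal{D})\to0$ when $|\mathcal{D}|\ge2$ is fixed and $n\to\infty$, and also when $n\ge2$ is fixed and $|\mathcal{D}|\to\infty$.
   Context: An $n$-ary relation on $\mathcal{D}$ is a subset $R\subseteq\mathcal{D}^{\{1,\dots,n\}}$. $R$ is degenerate if there is a partition $\{1,\dots,n\}=\Lambda_1\cup\dots\cup\Lambda_m$ with $m>1$ and all $\Lambda_i\ne\emptyset$ and relations $R^{\Lambda_i}\subseteq\mathcal{D}^{\Lambda_i}$ such that $R=\{a: a|_{\Lambda_i}\in R^{\Lambda_i}\ \forall i\}$. *)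

theory Defs
  imports Complex_Main "HOL-Library.FuncSet" "HOL-Library.Disjoint_Sets"
begin

definition relation_on :: "nat \<Rightarrow> 'a set \<Rightarrow> (nat \<Rightarrow> 'a) set \<Rightarrow> bool" where
  "relation_on n D R \<longleftrightarrow> R \<subseteq> ({1..n} \<rightarrow>\<^sub>E D)"

definition degenerate :: "nat \<Rightarrow> 'a set \<Rightarrow> (nat \<Rightarrow> 'a) set \<Rightarrow> bool" where
  "degenerate n D R \<longleftrightarrow>
     (\<exists>P S. partition_on {1..n} P \<and> card P > 1 \<and>
        (\<forall>B\<in>P. S B \<subseteq> (B \<rightarrow>\<^sub>E D)) \<and>
        R = {a \<in> {1..n} \<rightarrow>\<^sub>E D. \<forall>B\<in>P. restrict a B \<in> S B})"

definition p_degen :: "nat \<Rightarrow> 'a set \<Rightarrow> real" where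
  "p_degen n D = real (card {R. relation_on n D R \<and> degenerate n D R}) / 2 ^ (card D ^ n)"

end

theory Submission imports Defs begin

lemma xy_le: "(1::nat) \<le> x \<Longrightarrow> 1 \<le> y \<Longrightarrow> x + y \<le> x*y + 1"
proof -
  assume "1 \<le> x" "1 \<le> y"
  then obtain a b where "x = a+1" "y = b+1" by (metis le_add_diff_inverse2)
  then show ?thesis by (simp add: algebra_simps)
qed

lemma exp_le:
  fixes d k n :: nat
  assumes "1 \<le> d" "1 \<le> k" "k < n"
  shows "d^k + d^(n-k) \<le> d + d^(n-1)"
proof -
  obtain a where a: "k = a+1" using assms by (metis le_add_diff_inverse2)
  obtain b where b: "n - k = b+1" using assms by (metis Suc_eq_plus1 Suc_diff_Suc)
  have n1: "n - 1 = a + b + 1" using a b assms by simp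
  have "d^a + d^b \<le> d^a*d^b + 1" using xy_le assms by simp
  then have "d*(d^a + d^b) \<le> d*(d^a*d^b + 1)" by (rule mult_le_mono2)
  moreover have "d^(a+1) + d^(b+1) = d*(d^a+d^b)" "d + d^(a+b+1) = d*(d^a*d^b+1)"
    by (simp_all add: algebra_simps power_add)
  moreover have "d^k + d^(n-k) = d^(a+1)+d^(b+1)" using a b by simp
  moreover have "d^(n-1) = d^(a+b+1)" using n1 by simp
  ultimately show ?thesis by linarith
qed

definition F :: "nat \<Rightarrow> nat set \<Rightarrow> 'a set \<Rightarrow> ((nat \<Rightarrow> 'a) set \<times> (nat \<Rightarrow> 'a) set) \<Rightarrow> (nat \<Rightarrow> 'a) set" where
  "F n L D SS = {a \<in> {1..n} \<rightarrow>\<^sub>E D. restrict a L \<in> fst SS \<and> restrict a ({1..n}-L) \<in> snd SS}"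

lemma degen_split:
  assumes "degenerate n D R"
  shows "\<exists>L. L \<subseteq> {1..n} \<and> L \<noteq> {} \<and> L \<noteq> {1..n} \<and>
     (\<exists>SS \<in> Pow (L \<rightarrow>\<^sub>E D) \<times> Pow (({1..n}-L) \<rightarrow>\<^sub>E D). R = F n L D SS)"
proof -
  obtain P S where P: "partition_on {1..n} P" "card P > 1" "\<forall>B\<in>P. S B \<subseteq> (B \<rightarrow>\<^sub>E D)"
    and R: "R = {a \<in> {1..n} \<rightarrow>\<^sub>E D. \<forall>B\<in>P. restrict a B \<in> S B}"
    using assms unfolding degenerate_def by blast
  have U: "\<Union>P = {1..n}" using P(1) partition_onD1 by blast
  have ne: "{} \<notin> P" using P(1) partition_onD3 by blast
  have dj: "\<And>A B. A \<in> P \<Longrightarrow> B \<in> P \<Longrightarrow> A \<noteq> B \<Longrightarrow> A \<inter> B = {}"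
    using P(1) partition_onD2 disjointD by blast
  have "P \<noteq> {}" using P(2) by (metis card.empty not_less_zero)
  then obtain B0 where B0: "B0 \<in> P" by blast
  have "\<exists>B1 \<in> P. B1 \<noteq> B0"
  proof (rule ccontr)
    assume "\<not> ?thesis"
    then have "P = {B0}" using B0 by blast
    then show False using P(2) by simp
  qed
  then obtain B1 where B1: "B1 \<in> P" "B1 \<noteq> B0" by blast
  have B0sub: "B0 \<subseteq> {1..n}" using U B0 by blast
  have B0ne: "B0 \<noteq> {}" using ne B0 by blast
  have B0prop: "B0 \<noteq> {1..n}"
  proof
    assume h: "B0 = {1..n}"
    have "B1 \<subseteq> {1..n}" "B1 \<noteq> {}" using U B1 ne by blast+
    then show False using dj[OF B0 B1(1)] B1(2) h by blast
  qed
  define S2 where "S2 = {b \<in> ({1..n}-B0) \<rightarrow>\<^sub>E D. \<forall>B\<in>P-{B0}. restrict b B \<in> S B}"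
  have BsubC: "\<And>B. B \<in> P - {B0} \<Longrightarrow> B \<subseteq> {1..n} - B0"
    using U dj B0 by blast
  have "R = F n B0 D (S B0, S2)"
  proof (rule set_eqI, rule iffI)
    fix a assume "a \<in> R"
    then have a: "a \<in> {1..n} \<rightarrow>\<^sub>E D" "\<forall>B\<in>P. restrict a B \<in> S B" using R by auto
    have "\<forall>B\<in>P-{B0}. restrict (restrict a ({1..n}-B0)) B \<in> S B"
    proof
      fix B assume B: "B \<in> P-{B0}"
      have "({1..n}-B0) \<inter> B = B" using BsubC[OF B] by blast
      then show "restrict (restrict a ({1..n}-B0)) B \<in> S B" using a B by (simp add: restrict_restrict)
    qed
    moreover have "restrict a ({1..n}-B0) \<in> ({1..n}-B0) \<rightarrow>\<^sub>E D" using a(1) by (auto simp: PiE_iff)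
    ultimately have "restrict a ({1..n}-B0) \<in> S2"
      unfolding S2_def by blast
    then show "a \<in> F n B0 D (S B0, S2)" unfolding F_def using a B0 by auto
  next
    fix a assume "a \<in> F n B0 D (S B0, S2)"
    then have a: "a \<in> {1..n} \<rightarrow>\<^sub>E D" "restrict a B0 \<in> S B0" "restrict a ({1..n}-B0) \<in> S2"
      unfolding F_def by auto
    have "\<forall>B\<in>P. restrict a B \<in> S B"
    proof
      fix B assume B: "B \<in> P"
      show "restrict a B \<in> S B"
      proof (cases "B = B0")
        case True then show ?thesis using a by simp
      next
        case False
        then have "restrict (restrict a ({1..n}-B0)) B \<in> S B" using a(3) B unfolding S2_def by auto
        moreover have "restrict (restrict a ({1..n}-B0)) B = restrict a B"
        proof -
          have "({1..n}-B0) \<inter> B = B" using BsubC[of B] B False by blast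
          then show ?thesis by (simp add: restrict_restrict)
        qed
        ultimately show ?thesis by simp
      qed
    qed
    then show "a \<in> R" using R a by auto
  qed
  moreover have "(S B0, S2) \<in> Pow (B0 \<rightarrow>\<^sub>E D) \<times> Pow (({1..n}-B0) \<rightarrow>\<^sub>E D)"
    using P(3) B0 unfolding S2_def by auto
  ultimately show ?thesis using B0sub B0ne B0prop by blast
qed

lemma count_bound:
  assumes D: "finite D" "card D \<ge> 1"
  shows "card {R. relation_on n D R \<and> degenerate n D R} \<le> 2^n * 2^(card D + card D^(n-1))"
proof -
  define d where "d = card D"
  define I where "I = {L. L \<subseteq> {1..n} \<and> L \<noteq> {} \<and> L \<noteq> {1..n}}"
  define G where "G L = F n L D ` (Pow (L \<rightarrow>\<^sub>E D) \<times> Pow (({1..n}-L) \<rightarrow>\<^sub>E D))" for L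
  have sub: "{R. relation_on n D R \<and> degenerate n D R} \<subseteq> (\<Union>L\<in>I. G L)"
  proof
    fix R assume "R \<in> {R. relation_on n D R \<and> degenerate n D R}"
    then have "degenerate n D R" by simp
    from degen_split[OF this] obtain L SS where "L \<in> I" "SS \<in> Pow (L \<rightarrow>\<^sub>E D) \<times> Pow (({1..n}-L) \<rightarrow>\<^sub>E D)" "R = F n L D SS"
      unfolding I_def by blast
    then show "R \<in> (\<Union>L\<in>I. G L)" unfolding G_def by blast
  qed
  have finI: "finite I" unfolding I_def by (rule finite_subset[of _ "Pow {1..n}"]) auto
  have finG: "finite (G L)" if "L \<in> I" for L
  proof -
    have "L \<subseteq> {1..n}" using that unfolding I_def by simp
    then have "finite L" by (rule finite_subset) simp
    then show ?thesis unfolding G_def using D by (intro finite_imageI finite_cartesian_product finite_Pow_iff[THEN iffD2] finite_PiE) auto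
  qed
  have cG: "card (G L) \<le> 2^(d + d^(n-1))" if L: "L \<in> I" for L
  proof -
    have Lsub: "L \<subseteq> {1..n}" "L \<noteq> {}" "L \<noteq> {1..n}" using L unfolding I_def by auto
    have finL: "finite L" using Lsub(1) by (rule finite_subset) simp
    have k1: "1 \<le> card L" using finL Lsub by (simp add: Suc_le_eq card_gt_0_iff)
    have kn: "card L < n" using psubset_card_mono[of "{1..n}" L] Lsub by auto
    have cc: "card ({1..n}-L) = n - card L" using Lsub finL by (simp add: card_Diff_subset)
    have "card (G L) \<le> card (Pow (L \<rightarrow>\<^sub>E D) \<times> Pow (({1..n}-L) \<rightarrow>\<^sub>E D))"
      unfolding G_def by (rule card_image_le) (use D finL in \<open>intro finite_cartesian_product finite_Pow_iff[THEN iffD2] finite_PiE, auto\<close>)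
    also have "\<dots> = 2^(d^card L) * 2^(d^(n - card L))"
    proof -
      have f1: "finite (L \<rightarrow>\<^sub>E D)" "finite (({1..n}-L) \<rightarrow>\<^sub>E D)" using D finL by (simp_all add: finite_PiE)
      show ?thesis using D finL cc f1 by (simp add: card_cartesian_product card_Pow card_PiE d_def)
    qed
    also have "\<dots> = 2^(d^card L + d^(n - card L))" by (simp add: power_add)
    also have "\<dots> \<le> 2^(d + d^(n-1))"
    proof -
      have "d^card L + d^(n-card L) \<le> d + d^(n-1)" using exp_le[of d "card L" n] D k1 kn unfolding d_def by blast
      then show ?thesis by (rule power_increasing) simp
    qed
    finally show ?thesis .
  qed
  have "card {R. relation_on n D R \<and> degenerate n D R} \<le> card (\<Union>L\<in>I. G L)"
    by (rule card_mono[OF _ sub]) (use finI finG in auto)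
  also have "\<dots> \<le> (\<Sum>L\<in>I. card (G L))" by (rule card_UN_le[OF finI])
  also have "\<dots> \<le> (\<Sum>L\<in>I. 2^(d + d^(n-1)))" by (rule sum_mono) (rule cG)
  also have "\<dots> = card I * 2^(d + d^(n-1))" by simp
  also have "\<dots> \<le> 2^n * 2^(d + d^(n-1))"
  proof -
    have "card I \<le> card (Pow {1..n::nat})" by (rule card_mono) (auto simp: I_def)
    then have "card I \<le> 2^n" by (simp add: card_Pow)
    then show ?thesis by simp
  qed
  finally show ?thesis unfolding d_def .
qed

lemma ratio_bound:
  assumes D: "finite D" "card D \<ge> 1"
  shows "p_degen n D \<le> (2::real)^n * 2^(card D + card D^(n-1)) / 2^(card D^n)"
proof -
  have "real (card {R. relation_on n D R \<and> degenerate n D R}) \<le> real (2^n * 2^(card D + card D^(n-1)))"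
    using count_bound[OF D, of n] by linarith
  then have "real (card {R. relation_on n D R \<and> degenerate n D R}) \<le> (2::real)^n * 2^(card D + card D^(n-1))"
    by simp
  then show ?thesis unfolding p_degen_def by (simp add: divide_right_mono)
qed

lemma p_nonneg: "0 \<le> p_degen n D" unfolding p_degen_def by simp

lemma two_m: "2*m \<le> (2::nat)^m"
proof (induction m)
  case 0 then show ?case by simp
next
  case (Suc m)
  show ?case
  proof (cases m)
    case 0 then show ?thesis by simp
  next
    case (Suc k)
    have "2 \<le> (2::nat)^m" using Suc by (simp add: self_le_power)
    then show ?thesis using Suc.IH by simp
  qed
qed

lemma part1:
  assumes D: "finite D" "card D \<ge> 2"
  shows "(\<lambda>n. p_degen n D) \<longlonglongrightarrow> 0"
proof -
  define d where "d = card D"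
  have d2: "d \<ge> 2" using D d_def by simp
  have expo: "2*n + d + d^(n-1) \<le> d + 2 + d^n" for n
  proof (cases n)
    case 0 then show ?thesis by simp
  next
    case (Suc m)
    have "2*m \<le> 2^m" by (rule two_m)
    also have "(2::nat)^m \<le> d^m" using d2 by (simp add: power_mono)
    finally have a: "2*m \<le> d^m" .
    have "2*d^m \<le> d*d^m" using d2 by (rule mult_le_mono1)
    then have "2*m + d^m \<le> d*d^m" using a by linarith
    then show ?thesis using Suc by simp
  qed
  have bnd: "p_degen n D \<le> 2^(d+2) * (1/2)^n" for n
  proof -
    have "(2::real)^n * 2^(d + d^(n-1)) * 2^n = 2^(2*n + d + d^(n-1))"
      by (simp add: power_add[symmetric] algebra_simps)
    also have "\<dots> \<le> 2^(d + 2 + d^n)" by (rule power_increasing) (use expo in auto)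
    also have "\<dots> = 2^(d+2) * 2^(d^n)" by (simp add: power_add)
    finally have h: "(2::real)^n * 2^(d + d^(n-1)) * 2^n \<le> 2^(d+2) * 2^(d^n)" .
    have "p_degen n D \<le> (2::real)^n * 2^(d + d^(n-1)) / 2^(d^n)"
      using ratio_bound[of D n] D unfolding d_def by simp
    also have "\<dots> \<le> 2^(d+2) / 2^n"
      using h by (simp add: divide_simps)
    finally show ?thesis by (simp add: power_one_over divide_simps)
  qed
  have lim: "(\<lambda>n. 2^(d+2) * (1/2::real)^n) \<longlonglongrightarrow> 0"
    by (rule tendsto_mult_right_zero) (rule LIMSEQ_power_zero, simp)
  show ?thesis
    by (rule tendsto_sandwich[OF always_eventually always_eventually tendsto_const lim]) (use p_nonneg bnd in blast)+
qed

lemma part2: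
  assumes n: "n \<ge> 2" and e: "\<epsilon> > 0"
  shows "\<exists>N. \<forall>D :: 'a set. finite D \<and> card D \<ge> N \<longrightarrow> p_degen n D < \<epsilon>"
proof -
  obtain m where m: "(1/2::real)^m < \<epsilon>" using real_arch_pow_inv[OF e, of "1/2"] by auto
  show ?thesis
  proof (intro exI allI impI)
    fix D :: "'a set" assume D: "finite D \<and> card D \<ge> n + m + 2"
    define d where "d = card D"
    define c where "c = d - 2"
    have c: "d = c + 2" "c \<ge> n + m" using D unfolding d_def c_def by auto
    define e where "e = d^(n-1)"
    have "d^1 \<le> d^(n-1)" by (rule power_increasing) (use n c in auto)
    then have ed: "e \<ge> d" unfolding e_def by simp
    have nn: "n = Suc (n-1)" using n by simp
    have dn: "d^n = d*e" unfolding e_def by (subst nn) (simp del: Suc_diff_1 One_nat_def)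
    have "d*e = (c+1)*e + e" using c by simp
    moreover have "(c+1)*e \<ge> (c+1)*(c+2)" by (rule mult_le_mono2) (use ed c in simp)
    moreover have "(c+1)*(c+2) = c*c + 3*c + 2" by (simp add: algebra_simps)
    ultimately have ex: "n + d + e + m \<le> d^n" using dn c by linarith
    have "(2::real)^n * 2^(d + e) * 2^m = 2^(n + d + e + m)" by (simp add: power_add)
    also have "\<dots> \<le> 2^(d^n)" by (rule power_increasing) (use ex in auto)
    finally have h: "(2::real)^n * 2^(d + e) * 2^m \<le> 2^(d^n)" .
    have "p_degen n D \<le> (2::real)^n * 2^(d + e) / 2^(d^n)"
      using ratio_bound[of D n] D c unfolding d_def e_def by simp
    also have "\<dots> \<le> 1 / 2^m" using h by (simp add: divide_simps)
    also have "\<dots> = (1/2)^m" by (simp add: power_one_over)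
    finally show "p_degen n D < \<epsilon>" using m by linarith
  qed
qed

theorem theorem6:
  shows "(\<forall>D :: 'a set. finite D \<and> card D \<ge> 2 \<longrightarrow> (\<lambda>n. p_degen n D) \<longlonglongrightarrow> 0) \<and>
         (\<forall>n::nat. n \<ge> 2 \<longrightarrow>
            (\<forall>\<epsilon>>0. \<exists>N. \<forall>D :: 'a set. finite D \<and> card D \<ge> N \<longrightarrow> p_degen n D < \<epsilon>))"
  using part1 part2 by blast

end
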